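(* Let $n\ge1$ and let $X$ be any random variable on $[0,1]$ with output distribution $P_Y$ through the binomial channel with $n$ trials. Set $\epsilon_k:=\mathbb E[\tilde T_k(X)]$ and $h_k:=\frac12\prod_{j=1}^k\frac{n+j}{n-j+1}$ for $1\le k\le n$. Then \[ \chi^2(P_Y\,\|\,P_{Y_r})=\sum_{k=1}^n\frac{\epsilon_k^2}{h_k}. \]
   Context: The binomial channel with $n$ trials has transition law $P_{Y|X}(y|x)=\binom{n}{y}x^y(1-x)^{n-y}$, $x\in[0,1]$, $y\in\{0,\dots,n\}$. $\tilde T_k(x)=\cos(k\arccos(2x-1))$ is the shifted Chebyshev polynomial of the first kind. $P_{Y_r}(y)=\frac{\Gamma(y+1/2)\Gamma(n-y+1/2)}{\pi\,\Gamma(y+1)\Gamma(n-y+1)}$, $y=0,\dots,n$, is the output induced by $X_r\sim\mathrm{Beta}(1/2,1/2)$. $\chi^2(P\|Q)=\sum_y \frac{(P(y)-Q(y))^2}{Q(y)}$. *)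

theory Defs
  imports "HOL-Probability.Probability"
begin

definition shifted_cheb :: "nat \<Rightarrow> real \<Rightarrow> real" where
  "shifted_cheb k x = cos (real k * arccos (2 * x - 1))"

definition binom_channel :: "nat \<Rightarrow> real \<Rightarrow> nat \<Rightarrow> real" where
  "binom_channel n x y = real (n choose y) * x ^ y * (1 - x) ^ (n - y)"

text \<open>Output law induced by the arcsine input Beta(1/2,1/2).\<close>
definition PYr :: "nat \<Rightarrow> nat \<Rightarrow> real" where
  "PYr n y = Gamma (real y + 1/2) * Gamma (real n - real y + 1/2)
             / (pi * Gamma (real y + 1) * Gamma (real n - real y + 1))"

definition chi_sq :: "nat \<Rightarrow> (nat \<Rightarrow> real) \<Rightarrow> (nat \<Rightarrow> real) \<Rightarrow> real" where
  "chi_sq n P Q = (\<Sum>y\<in>{0..n}. (P y - Q y)^2 / Q y)"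

end

theory Submission imports Defs begin

lemma fact2Suc: "(fact (2*Suc y)::real) = (2*real y+2)*(2*real y+1)*fact(2*y)"
proof -
  have "2*Suc y = Suc (Suc (2*y))" by simp
  then show ?thesis by (simp only: fact_Suc) (simp add: algebra_simps)
qed

lemma Gamma_half_nat:
  "Gamma (real y + 1/2) = sqrt pi * fact (2*y) / (4^y * fact y)"
proof (induction y)
  case 0 then show ?case by (simp add: Gamma_one_half_real)
next
  case (Suc y)
  have nz: "real y + 1/2 \<notin> \<int>\<^sub>\<le>\<^sub>0"
    using nonpos_Ints_nonpos by fastforce
  have "Gamma (real (Suc y) + 1/2) = Gamma ((real y + 1/2) + 1)" by (simp add: algebra_simps)
  also have "\<dots> = (real y + 1/2) * Gamma (real y + 1/2)" using Gamma_plus1[OF nz] by simp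
  also have "\<dots> = (real y + 1/2) * (sqrt pi * fact (2*y) / (4^y * fact y))" using Suc by simp
  also have "\<dots> = sqrt pi * fact (2*Suc y) / (4^Suc y * fact (Suc y))"
  proof -
    have fs: "(fact (Suc y)::real) = (real y + 1) * fact y" by (simp add: fact_Suc)
    have "sqrt pi * fact (2*Suc y) / (4^Suc y * fact (Suc y))
      = (sqrt pi * fact (2*y) * (2*real y+1)) * (2*real y+2) / ((2 * 4^y * fact y) * (2*real y + 2))"
      unfolding fact2Suc fs by (simp add: algebra_simps)
    also have "\<dots> = (sqrt pi * fact (2*y) * (2*real y+1)) / (2 * 4^y * fact y)"
      by (rule mult_divide_mult_cancel_right) simp
    also have "\<dots> = (real y + 1/2) * (sqrt pi * fact (2*y) / (4^y * fact y))"
      by (simp add: field_simps)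
    finally show ?thesis by simp
  qed
  finally show ?case .
qed

lemma pochhammer_half: "pochhammer (1/2::real) y = fact (2*y) / (4^y * fact y)"
proof (induction y)
  case 0 then show ?case by simp
next
  case (Suc y)
  have fs: "(fact (Suc y)::real) = (real y + 1) * fact y" by (simp add: fact_Suc)
  have "fact (2*Suc y) / (4^Suc y * fact (Suc y))
      = (fact (2*y) * (2*real y+1)) * (2*real y+2) / ((2 * 4^y * fact y) * (2*real y + 2))"
      unfolding fact2Suc fs by (simp add: algebra_simps)
  also have "\<dots> = (fact (2*y) * (2*real y+1)) / (2 * 4^y * fact y)"
      by (rule mult_divide_mult_cancel_right) simp
  also have "\<dots> = fact (2*y) / (4^y * fact y) * (1/2 + real y)"
      by (simp add: field_simps)
  finally show ?case unfolding pochhammer_Suc Suc by simp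
qed

lemma PYr_eq:
  assumes "y \<le> n"
  shows "PYr n y = fact (2*y) * fact (2*(n-y)) / (4^n * (fact y)^2 * (fact (n-y))^2)"
proof -
  have e1: "real n - real y = real (n-y)" using assms by simp
  have g1: "Gamma (real y + 1) = fact y" using Gamma_fact[of y] by (simp add: add.commute)
  have g2: "Gamma (real (n-y) + 1) = fact (n-y)" using Gamma_fact[of "n-y"] by (simp add: add.commute)
  have p4: "(4::real)^n = 4^y * 4^(n-y)" using assms by (simp add: power_add[symmetric])
  define u where "u = fact (2*y) / (4^y * fact y :: real)"
  define v where "v = fact (2*(n-y)) / (4^(n-y) * fact (n-y) :: real)"
  have ga: "Gamma (real y + 1/2) * Gamma (real (n-y) + 1/2) = pi * (u * v)"
  proof -
    have "Gamma (real y + 1/2) * Gamma (real (n-y) + 1/2) = (sqrt pi * sqrt pi) * (u * v)"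
      unfolding Gamma_half_nat u_def v_def by (simp only: mult_ac times_divide_eq_right times_divide_eq_left)
    then show ?thesis by simp
  qed
  have "PYr n y = (pi * (u * v)) / (pi * (fact y * fact (n-y)))"
    unfolding PYr_def e1 g1 g2 ga by (simp add: mult_ac)
  also have "\<dots> = (u * v) / (fact y * fact (n-y))"
    by (rule mult_divide_mult_cancel_left) simp
  also have "\<dots> = fact (2*y) * fact (2*(n-y)) / ((4^y * 4^(n-y)) * (fact y)^2 * (fact (n-y))^2)"
    unfolding u_def v_def by (simp add: power2_eq_square mult_ac)
  finally show ?thesis unfolding p4 .
qed

lemma sum_PYr: "(\<Sum>y=0..n. PYr n y) = 1"
proof -
  define c where "c y = fact (2*y) / (4^y * (fact y)^2 :: real)" for y
  have gc: "((-1/2::real) gchoose y) = (-1)^y * c y" for y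
  proof -
    have "((-1/2::real) gchoose y) = (-1)^y * pochhammer (1/2) y / fact y"
      unfolding gbinomial_pochhammer by simp
    also have "\<dots> = (-1)^y * c y" unfolding pochhammer_half c_def
      by (simp add: power2_eq_square)
    finally show ?thesis .
  qed
  have "(\<Sum>k=0..n. ((-1/2::real) gchoose k) * ((-1/2) gchoose (n - k))) = (-1/2 + -1/2) gchoose n"
    by (rule gbinomial_Vandermonde)
  also have "\<dots> = (-1)^n"
    by (simp add: gbinomial_pochhammer pochhammer_fact[symmetric])
  finally have V: "(\<Sum>k=0..n. ((-1/2::real) gchoose k) * ((-1/2) gchoose (n - k))) = (-1)^n" .
  have "(\<Sum>k=0..n. ((-1/2::real) gchoose k) * ((-1/2) gchoose (n - k))) = (\<Sum>k=0..n. (-1)^n * (c k * c (n-k)))"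
  proof (rule sum.cong)
    fix k assume "k \<in> {0..n}"
    then have "(-1::real)^k * (-1)^(n-k) = (-1)^n" by (simp add: power_add[symmetric])
    then show "((-1/2::real) gchoose k) * ((-1/2) gchoose (n - k)) = (-1)^n * (c k * c (n-k))"
      unfolding gc by (metis mult.assoc mult.left_commute)
  qed simp
  then have "(\<Sum>k=0..n. c k * c (n-k)) = 1" using V by (simp add: sum_distrib_left[symmetric])
  moreover have "PYr n y = c y * c (n-y)" if "y \<in> {0..n}" for y
  proof -
    have yn: "y \<le> n" using that by simp
    then have "PYr n y = fact (2*y) * fact (2*(n-y)) / (4^n * (fact y)^2 * (fact (n-y))^2)"
      by (rule PYr_eq)
    also have "\<dots> = fact (2*y) * fact (2*(n-y)) / ((4^y * (fact y)^2) * (4^(n-y) * (fact (n-y))^2))"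
      using yn by (simp add: power_add[symmetric] mult_ac)
    also have "\<dots> = c y * c (n-y)" unfolding c_def by simp
    finally show ?thesis .
  qed
  ultimately show ?thesis by simp
qed
lemma even_split_sum:
  fixes g :: "nat \<Rightarrow> real"
  shows "(\<Sum>j=0..2*n. (if even j then g j else 0)) = (\<Sum>y=0..n. g (2*y))"
proof (induction n)
  case 0 then show ?case by simp
next
  case (Suc n)
  have "{0..2*Suc n} = insert (Suc (Suc (2*n))) (insert (Suc (2*n)) {0..2*n})" by auto
  then have "(\<Sum>j=0..2*Suc n. (if even j then g j else 0))
     = (\<Sum>j=0..2*n. (if even j then g j else 0)) + g (2 * Suc n)" by simp
  then show ?case using Suc by simp
qed

lemma prod_h:
  assumes "k \<le> n"
  shows "(\<Prod>j=1..k. (real n + real j) / (real n - real j + 1)) = fact (n+k) * fact (n-k) / (fact n)^2"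
  using assms
proof (induction k)
  case 0 then show ?case by (simp add: power2_eq_square)
next
  case (Suc k)
  then have kn: "k < n" by simp
  have f1: "fact (n - k) = real (n-k) * fact (n - Suc k)"
    using kn by (metis Suc_diff_Suc fact_Suc of_nat_fact)
  have pos: "real n - real (Suc k) + 1 = real (n-k)" using kn by simp
  have "(\<Prod>j=1..Suc k. (real n + real j) / (real n - real j + 1))
     = (\<Prod>j=1..k. (real n + real j) / (real n - real j + 1)) * ((real n + real (Suc k)) / (real n - real (Suc k) + 1))"
    by simp
  also have "\<dots> = fact (n+k) * fact (n-k) / (fact n)^2 * ((real n + real (Suc k)) / real (n-k))"
    using Suc kn pos by simp
  also have "\<dots> = fact (n+Suc k) * fact (n-Suc k) / (fact n)^2"
    using kn unfolding f1 by (simp add: fact_Suc field_simps)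
  finally show ?case .
qed

lemma cos_sum_raw:
  fixes g :: real
  shows "(2 * cos (g/2))^(2*n) = (\<Sum>j=0..2*n. real (2*n choose j) * cos ((real j - real n) * g))"
proof -
  have e: "cis (g/2) + cis (-(g/2)) = complex_of_real (2 * cos (g/2))"
    by (simp add: complex_eq_iff)
  have "complex_of_real ((2 * cos (g/2))^(2*n)) = (cis (g/2) + cis (-(g/2)))^(2*n)"
    unfolding e by simp
  also have "\<dots> = (\<Sum>j\<le>2*n. of_nat (2*n choose j) * cis (g/2)^j * cis (-(g/2))^(2*n-j))"
    by (rule binomial_ring)
  also have "\<dots> = (\<Sum>j=0..2*n. of_nat (2*n choose j) * cis ((real j - real n) * g))"
  proof (rule sum.cong)
    fix j assume "j \<in> {0..2*n}"
    then have r: "real (2*n-j) = 2 * real n - real j" by auto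
    have "cis (g/2)^j * cis (-(g/2))^(2*n-j) = cis (real j * (g/2) + real (2*n-j) * (-(g/2)))"
      by (simp only: Complex.DeMoivre cis_mult)
    also have "real j * (g/2) + real (2*n-j) * (-(g/2)) = (real j - real n) * g"
      unfolding r by (simp add: algebra_simps)
    finally have "cis (g/2)^j * cis (-(g/2))^(2*n-j) = cis ((real j - real n) * g)" .
    then show "of_nat (2*n choose j) * cis (g/2)^j * cis (-(g/2))^(2*n-j) = of_nat (2*n choose j) * cis ((real j - real n) * g)"
      by (simp only: mult.assoc)
  qed (simp add: atMost_atLeast0)
  finally have "complex_of_real ((2 * cos (g/2))^(2*n)) = (\<Sum>j=0..2*n. of_nat (2*n choose j) * cis ((real j - real n) * g))" .
  then have "Re (complex_of_real ((2 * cos (g/2))^(2*n))) = Re (\<Sum>j=0..2*n. of_nat (2*n choose j) * cis ((real j - real n) * g))"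
    by simp
  then show ?thesis by (simp add: Re_sum)
qed
lemma cos_sum:
  fixes g :: real
  shows "(2 * cos (g/2))^(2*n) = real (2*n choose n) + 2 * (\<Sum>k=1..n. real (2*n choose (n-k)) * cos (real k * g))"
proof -
  define f where "f j = real (2*n choose j) * cos ((real j - real n) * g)" for j
  have split: "{0..2*n} = {0..<n} \<union> {n} \<union> {n<..2*n}" by auto
  have "(\<Sum>j=0..2*n. f j) = (\<Sum>j\<in>{0..<n}. f j) + f n + (\<Sum>j\<in>{n<..2*n}. f j)"
    unfolding split by (subst sum.union_disjoint, auto)+
  moreover have "(\<Sum>k=1..n. real (2*n choose (n-k)) * cos (real k * g)) = (\<Sum>j\<in>{n<..2*n}. f j)"
  proof (rule sum.reindex_bij_witness[of _ "\<lambda>j. j - n" "\<lambda>k. n + k"])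
    fix k assume k: "k \<in> {1..n}"
    have a: "n - k \<le> 2*n" by simp
    have b: "2*n - (n-k) = n+k" using k by simp
    have "2*n choose (n-k) = 2*n choose (n+k)" using binomial_symmetric[OF a] unfolding b .
    then have "2*n choose (n+k) = 2*n choose (n-k)" by simp
    then show "f (n+k) = real (2*n choose (n-k)) * cos (real k * g)" unfolding f_def by simp
  qed auto
  moreover have "(\<Sum>k=1..n. real (2*n choose (n-k)) * cos (real k * g)) = (\<Sum>j\<in>{0..<n}. f j)"
  proof (rule sum.reindex_bij_witness[of _ "\<lambda>j. n - j" "\<lambda>k. n - k"])
    fix k assume k: "k \<in> {1..n}"
    then have "real (n-k) - real n = - real k" by auto
    then show "f (n-k) = real (2*n choose (n-k)) * cos (real k * g)" unfolding f_def by simp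
  qed auto
  moreover have "f n = real (2*n choose n)" unfolding f_def by simp
  ultimately show ?thesis using cos_sum_raw[of g n] unfolding f_def[symmetric] by simp
qed

lemma cos_half_arccos:
  fixes x :: real
  assumes "0 \<le> x" "x \<le> 1"
  shows "cos (arccos (2*x-1) / 2) = sqrt x" "sin (arccos (2*x-1) / 2) = sqrt (1-x)"
proof -
  define t where "t = arccos (2*x-1)"
  have r: "-1 \<le> 2*x-1" "2*x-1 \<le> 1" using assms by auto
  have t1: "0 \<le> t" unfolding t_def using arccos_lbound[OF r] by blast
  have t2: "t \<le> pi" unfolding t_def using arccos_ubound[OF r] by blast
  have t3: "cos t = 2*x-1" unfolding t_def using cos_arccos[OF r] .
  have c2: "cos t = 2 * cos (t/2)^2 - 1" using cos_double_cos[of "t/2"] by simp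
  have cc: "cos (t/2)^2 = x" using c2 t3 by linarith
  have cpos: "cos (t/2) \<ge> 0" using t1 t2 by (intro cos_ge_zero) auto
  have spos: "sin (t/2) \<ge> 0" using t1 t2 by (intro sin_ge_zero) auto
  have ss: "sin (t/2)^2 = 1 - x" using cc sin_cos_squared_add[of "t/2"] by linarith
  have "sqrt x = cos (t/2)" using cc cpos real_sqrt_abs[of "cos (t/2)"] by simp
  then show "cos (arccos (2*x-1) / 2) = sqrt x" unfolding t_def by simp
  have "sqrt (1-x) = sin (t/2)" using ss spos real_sqrt_abs[of "sin (t/2)"] by simp
  then show "sin (arccos (2*x-1) / 2) = sqrt (1-x)" unfolding t_def by simp
qed

lemma kernel:
  fixes x z :: real
  assumes x: "0 \<le> x" "x \<le> 1" and z: "0 \<le> z" "z \<le> 1"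
  shows "(\<Sum>y=0..n. binom_channel n x y * binom_channel n z y / PYr n y)
    = 1 + (\<Sum>k=1..n. shifted_cheb k x * shifted_cheb k z / ((1/2) * (\<Prod>j=1..k. (real n + real j) / (real n - real j + 1))))"
proof -
  define p where "p = sqrt x * sqrt z"
  define q where "q = sqrt (1-x) * sqrt (1-z)"
  define F where "F = 4^n * (fact n)^2 / (fact (2*n) :: real)"
  have p2: "p^2 = x * z" unfolding p_def using x z by (simp add: power_mult_distrib)
  have q2: "q^2 = (1-x) * (1-z)" unfolding q_def using x z by (simp add: power_mult_distrib)
  have L1: "binom_channel n x y * binom_channel n z y / PYr n y = F * (real (2*n choose (2*y)) * p^(2*y) * q^(2*n-2*y))"
    if "y \<in> {0..n}" for y
  proof -
    have yn: "y \<le> n" using that by simp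
    have c1: "real (n choose y) = fact n / (fact y * fact (n-y))" using binomial_fact[OF yn] by simp
    have c2: "real (2*n choose (2*y)) = fact (2*n) / (fact (2*y) * fact (2*(n-y)))"
      using binomial_fact[of "2*y" "2*n"] yn by (simp add: diff_mult_distrib2)
    have pp: "p^(2*y) = (x*z)^y" by (simp add: power_mult p2)
    have qq: "q^(2*n-2*y) = ((1-x)*(1-z))^(n-y)"
      by (simp add: power_mult q2 diff_mult_distrib2[symmetric])
    have "binom_channel n x y * binom_channel n z y = real (n choose y)^2 * ((x*z)^y * ((1-x)*(1-z))^(n-y))"
      unfolding binom_channel_def by (simp add: power2_eq_square power_mult_distrib mult_ac)
    then show ?thesis
      unfolding PYr_eq[OF yn] c1 c2 pp qq F_def
      by (simp add: field_simps power2_eq_square)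
  qed
  have binsum: "(q+p)^(2*n) + (q-p)^(2*n) = (\<Sum>y=0..n. 2 * (real (2*n choose (2*y)) * p^(2*y) * q^(2*n-2*y)))"
  proof -
    have e1: "(p+q)^(2*n) = (\<Sum>j=0..2*n. real (2*n choose j) * p^j * q^(2*n-j))"
      using binomial_ring[of p q "2*n"] by (simp add: atMost_atLeast0)
    have e2: "(-p+q)^(2*n) = (\<Sum>j=0..2*n. real (2*n choose j) * (-p)^j * q^(2*n-j))"
      using binomial_ring[of "-p" q "2*n"] by (simp add: atMost_atLeast0)
    have "(q+p)^(2*n) + (q-p)^(2*n) = (\<Sum>j=0..2*n. real (2*n choose j) * p^j * q^(2*n-j) + real (2*n choose j) * (-p)^j * q^(2*n-j))"
      using e1 e2 by (simp add: sum.distrib add.commute)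
    also have "\<dots> = (\<Sum>j=0..2*n. (if even j then 2 * (real (2*n choose j) * p^j * q^(2*n-j)) else 0))"
      by (rule sum.cong) (auto simp: power_minus')
    also have "\<dots> = (\<Sum>y=0..n. 2 * (real (2*n choose (2*y)) * p^(2*y) * q^(2*n-2*y)))"
      by (rule even_split_sum)
    finally show ?thesis .
  qed
  have LHS: "(\<Sum>y=0..n. binom_channel n x y * binom_channel n z y / PYr n y) = F/2 * ((q+p)^(2*n) + (q-p)^(2*n))"
  proof -
    have "(\<Sum>y=0..n. binom_channel n x y * binom_channel n z y / PYr n y)
       = (\<Sum>y=0..n. F * (real (2*n choose (2*y)) * p^(2*y) * q^(2*n-2*y)))"
      by (rule sum.cong) (simp_all only: L1)
    also have "\<dots> = F * (\<Sum>y=0..n. (real (2*n choose (2*y)) * p^(2*y) * q^(2*n-2*y)))"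
      by (simp only: sum_distrib_left)
    also have "\<dots> = F/2 * (2 * (\<Sum>y=0..n. (real (2*n choose (2*y)) * p^(2*y) * q^(2*n-2*y))))"
      by simp
    also have "2 * (\<Sum>y=0..n. (real (2*n choose (2*y)) * p^(2*y) * q^(2*n-2*y)))
       = (\<Sum>y=0..n. 2 * (real (2*n choose (2*y)) * p^(2*y) * q^(2*n-2*y)))"
      by (simp only: sum_distrib_left)
    finally show ?thesis unfolding binsum .
  qed
  define a where "a = arccos (2*x-1)"
  define b where "b = arccos (2*z-1)"
  have ca: "cos (a/2) = sqrt x" "sin (a/2) = sqrt (1-x)" unfolding a_def using cos_half_arccos[OF x] by auto
  have cb: "cos (b/2) = sqrt z" "sin (b/2) = sqrt (1-z)" unfolding b_def using cos_half_arccos[OF z] by auto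
  define w where "w k = (fact n)^2 / (fact (n-k) * fact (n+k) :: real)" for k
  have cs: "(fact n)^2 / fact (2*n) * (2 * cos (g/2))^(2*n) = 1 + 2 * (\<Sum>k=1..n. w k * cos (real k * g))" for g
  proof -
    have wk: "(fact n)^2 / fact (2*n) * real (2*n choose (n-k)) = w k" if "k \<in> {1..n}" for k
    proof -
      have "n - k \<le> 2*n" by simp
      moreover have "2*n - (n-k) = n+k" using that by auto
      ultimately have "real (2*n choose (n-k)) = fact (2*n) / (fact (n-k) * fact (n+k))"
        using binomial_fact[of "n-k" "2*n"] by simp
      then show ?thesis unfolding w_def by simp
    qed
    have c0: "(fact n)^2 / fact (2*n) * real (2*n choose n) = (1::real)"
    proof -
      have "real (2*n choose n) = fact (2*n) / (fact n * fact (2*n-n))"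
        using binomial_fact[of n "2*n"] by simp
      then show ?thesis by (simp add: mult_2 power2_eq_square)
    qed
    have "(fact n)^2 / fact (2*n) * (2 * cos (g/2))^(2*n)
       = (fact n)^2 / fact (2*n) * real (2*n choose n) + 2 * (\<Sum>k=1..n. ((fact n)^2 / fact (2*n) * real (2*n choose (n-k))) * cos (real k * g))"
      unfolding cos_sum by (simp add: algebra_simps sum_distrib_left)
    also have "\<dots> = 1 + 2 * (\<Sum>k=1..n. w k * cos (real k * g))"
      using wk c0 by simp
    finally show ?thesis .
  qed
  have hk: "shifted_cheb k x * shifted_cheb k z / ((1/2) * (\<Prod>j=1..k. (real n + real j) / (real n - real j + 1)))
      = w k * (cos (real k * (a+b)) + cos (real k * (a-b)))" if "k \<in> {1..n}" for k
  proof -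
    have kn: "k \<le> n" using that by simp
    have "cos (real k * (a+b)) + cos (real k * (a-b)) = 2 * (cos (real k * a) * cos (real k * b))"
      by (simp add: distrib_left right_diff_distrib cos_add cos_diff)
    then show ?thesis
      unfolding prod_h[OF kn] shifted_cheb_def a_def[symmetric] b_def[symmetric] w_def
      by (simp add: field_simps)
  qed
  have "1 + (\<Sum>k=1..n. shifted_cheb k x * shifted_cheb k z / ((1/2) * (\<Prod>j=1..k. (real n + real j) / (real n - real j + 1))))
      = 1 + (\<Sum>k=1..n. w k * cos (real k * (a+b))) + (\<Sum>k=1..n. w k * cos (real k * (a-b)))"
    using hk by (simp add: sum.distrib distrib_left)
  also have "\<dots> = ((fact n)^2 / fact (2*n) * (2 * cos ((a+b)/2))^(2*n) + (fact n)^2 / fact (2*n) * (2 * cos ((a-b)/2))^(2*n)) / 2"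
    unfolding cs by simp
  also have "\<dots> = F/2 * (cos ((a+b)/2)^(2*n) + cos ((a-b)/2)^(2*n))"
  proof -
    have t4: "(2*c)^(2*n) = 4^n * c^(2*n)" for c :: real
      by (simp add: power_mult_distrib power_mult)
    show ?thesis unfolding F_def t4 by (simp add: field_simps)
  qed
  also have "cos ((a+b)/2) = p - q"
    using cos_add[of "a/2" "b/2"] ca cb unfolding p_def q_def by (simp add: add_divide_distrib)
  also have "cos ((a-b)/2) = q + p"
    using cos_diff[of "a/2" "b/2"] ca cb unfolding p_def q_def by (simp add: diff_divide_distrib)
  also have "(p - q)^(2*n) = (q-p)^(2*n)"
    by (simp add: power_mult power2_commute)
  finally show ?thesis unfolding LHS by (simp add: add.commute)
qed

lemma arccos_meas: "arccos \<in> borel_measurable borel"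
proof -
  have o1: "arccos t = arccos 2" if "1 < t" for t
  proof -
    have "(\<lambda>x. 0 \<le> x \<and> x \<le> pi \<and> cos x = t) = (\<lambda>x. 0 \<le> x \<and> x \<le> pi \<and> cos x = 2)"
    proof (intro ext)
      fix x show "(0 \<le> x \<and> x \<le> pi \<and> cos x = t) = (0 \<le> x \<and> x \<le> pi \<and> cos x = 2)"
      proof -
        have "cos x \<noteq> t" "cos x \<noteq> 2" using that cos_le_one[of x] by linarith+
        then show ?thesis by simp
      qed
    qed
    then show ?thesis unfolding arccos_def by simp
  qed
  have o2: "arccos t = arccos (-2)" if "t < -1" for t
  proof -
    have "(\<lambda>x. 0 \<le> x \<and> x \<le> pi \<and> cos x = t) = (\<lambda>x. 0 \<le> x \<and> x \<le> pi \<and> cos x = -2)"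
    proof (intro ext)
      fix x show "(0 \<le> x \<and> x \<le> pi \<and> cos x = t) = (0 \<le> x \<and> x \<le> pi \<and> cos x = -2)"
      proof -
        have "cos x \<noteq> t" "cos x \<noteq> -2" using that cos_ge_minus_one[of x] by linarith+
        then show ?thesis by simp
      qed
    qed
    then show ?thesis unfolding arccos_def by simp
  qed
  have eq: "arccos = (\<lambda>t. if t < -1 then arccos (-2) else if 1 < t then arccos 2 else arccos (max (-1) (min 1 t)))"
  proof
    fix t show "arccos t = (if t < -1 then arccos (-2) else if 1 < t then arccos 2 else arccos (max (-1) (min 1 t)))"
    proof (cases "t < -1")
      case True then show ?thesis using o2[OF True] by simp
    next
      case False
      show ?thesis
      proof (cases "1 < t")
        case True then show ?thesis using o1[OF True] False by simp
      next
        case F2: False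
        then have "max (-1) (min 1 t) = t" using False by simp
        then show ?thesis using False F2 by simp
      qed
    qed
  qed
  have c: "continuous_on UNIV (\<lambda>t::real. arccos (max (-1) (min 1 t)))"
    by (intro continuous_on_arccos continuous_intros) auto
  have m: "(\<lambda>t::real. arccos (max (-1) (min 1 t))) \<in> borel_measurable borel"
    using borel_measurable_continuous_onI[OF c] .
  show ?thesis by (subst eq) (use m in measurable)
qed


lemma cheb_meas [measurable]: "shifted_cheb k \<in> borel_measurable borel"
proof -
  have "(\<lambda>t. arccos (2*t-1)) \<in> borel_measurable borel"
    using measurable_compose[OF _ arccos_meas, of "\<lambda>t. 2*t-1" borel] by simp
  then show ?thesis unfolding shifted_cheb_def[abs_def] by measurable
qed

lemma binom_meas [measurable]: "(\<lambda>x. binom_channel n x y) \<in> borel_measurable borel"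
  unfolding binom_channel_def by measurable

lemma binom_sum: "(\<Sum>y=0..n. binom_channel n x y) = 1"
  using binomial_ring[of x "1-x" n] unfolding binom_channel_def by (simp add: atMost_atLeast0 mult_ac)

lemma PYr_pos: "y \<le> n \<Longrightarrow> PYr n y > 0"
  by (simp add: PYr_eq)


theorem mainTheorem11:
  fixes M :: "'a measure" and X :: "'a \<Rightarrow> real" and n :: nat
  assumes "prob_space M"
    and "X \<in> borel_measurable M"
    and "AE \<omega> in M. X \<omega> \<in> {0..1}"
    and "n \<ge> 1"
  shows "chi_sq n (\<lambda>y. \<integral>\<omega>. binom_channel n (X \<omega>) y \<partial>M) (PYr n)
         = (\<Sum>k=1..n. (\<integral>\<omega>. shifted_cheb k (X \<omega>) \<partial>M)^2
              / ((1/2) * (\<Prod>j=1..k. (real n + real j) / (real n - real j + 1))))"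
proof -
  interpret prob_space M by (rule assms(1))
  have Xm[measurable]: "X \<in> borel_measurable M" by (rule assms(2))
  define Z where "Z \<omega> = max 0 (min 1 (X \<omega>))" for \<omega>
  have Zm[measurable]: "Z \<in> borel_measurable M" unfolding Z_def by measurable
  have Z01: "0 \<le> Z \<omega>" "Z \<omega> \<le> 1" for \<omega> unfolding Z_def by auto
  have AEZ: "AE \<omega> in M. X \<omega> = Z \<omega>" using assms(3) by eventually_elim (auto simp: Z_def)
  define D where "D k = (1/2) * (\<Prod>j=1..k. (real n + real j) / (real n - real j + 1))" for k
  define B where "B y \<omega> = binom_channel n (Z \<omega>) y" for y \<omega>
  define T where "T k \<omega> = shifted_cheb k (Z \<omega>)" for k \<omega>
  define P where "P y = (\<integral>\<omega>. B y \<omega> \<partial>M)" for y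
  define e where "e k = (\<integral>\<omega>. T k \<omega> \<partial>M)" for k
  define Q where "Q = PYr n"
  have Bm[measurable]: "B y \<in> borel_measurable M" for y unfolding B_def by measurable
  have Tm[measurable]: "T k \<in> borel_measurable M" for k unfolding T_def by measurable
  have intB: "integrable M (B y)" for y
  proof (rule integrable_const_bound[where B="real (n choose y)"])
    show "AE \<omega> in M. norm (B y \<omega>) \<le> real (n choose y)"
    proof (rule AE_I2)
      fix \<omega>
      have "Z \<omega> ^ y \<le> 1" "(1 - Z \<omega>)^(n-y) \<le> 1" using Z01[of \<omega>] by (auto intro: power_le_one)
      moreover have "0 \<le> Z \<omega> ^ y" "0 \<le> (1 - Z \<omega>)^(n-y)" using Z01[of \<omega>] by auto
      ultimately have "Z \<omega> ^ y * (1 - Z \<omega>)^(n-y) \<le> 1" by (simp add: mult_le_one)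
      then show "norm (B y \<omega>) \<le> real (n choose y)"
        unfolding B_def binom_channel_def using \<open>0 \<le> Z \<omega> ^ y\<close> \<open>0 \<le> (1 - Z \<omega>)^(n-y)\<close>
        by (simp add: abs_mult mult.assoc mult_left_le)
    qed
  qed simp
  have intT: "integrable M (T k)" for k
  proof (rule integrable_const_bound[where B=1])
    show "AE \<omega> in M. norm (T k \<omega>) \<le> 1"
      by (rule AE_I2) (simp add: T_def shifted_cheb_def)
  qed simp
  have PX: "(\<integral>\<omega>. binom_channel n (X \<omega>) y \<partial>M) = P y" for y
    unfolding P_def B_def by (rule integral_cong_AE) (use AEZ in auto)
  have eX: "(\<integral>\<omega>. shifted_cheb k (X \<omega>) \<partial>M) = e k" for k
    unfolding e_def T_def by (rule integral_cong_AE) (use AEZ in auto)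
  have Qpos: "Q y > 0" if "y \<in> {0..n}" for y using that PYr_pos unfolding Q_def by simp
  have sumQ: "(\<Sum>y=0..n. Q y) = 1" unfolding Q_def by (rule sum_PYr)
  have intBc: "integrable M (\<lambda>\<omega>. c * B y \<omega> / d)" "integrable M (\<lambda>\<omega>. B y \<omega> * c / d)" for c d y
    using intB[of y] by auto
  have intTc: "integrable M (\<lambda>\<omega>. c * T k \<omega> / d)" "integrable M (\<lambda>\<omega>. T k \<omega> * c / d)" for c d k
    using intT[of k] by auto
  have sumP: "(\<Sum>y=0..n. P y) = 1"
  proof -
    have "(\<Sum>y=0..n. P y) = (\<integral>\<omega>. (\<Sum>y=0..n. B y \<omega>) \<partial>M)"
      unfolding P_def using intB by (simp add: integral_sum)
    also have "\<dots> = (\<integral>\<omega>. 1 \<partial>M)" unfolding B_def binom_sum by simp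
    also have "\<dots> = 1" using prob_space by simp
    finally show ?thesis .
  qed
  have inner: "(\<Sum>y=0..n. B y \<omega> * P y / Q y) = 1 + (\<Sum>k=1..n. T k \<omega> * e k / D k)" for \<omega>
  proof -
    have "(\<Sum>y=0..n. B y \<omega> * P y / Q y) = (\<Sum>y=0..n. (\<integral>\<omega>'. B y \<omega> * B y \<omega>' / Q y \<partial>M))"
      unfolding P_def by simp
    also have "\<dots> = (\<integral>\<omega>'. (\<Sum>y=0..n. B y \<omega> * B y \<omega>' / Q y) \<partial>M)"
      using intBc by (simp add: integral_sum)
    also have "\<dots> = (\<integral>\<omega>'. 1 + (\<Sum>k=1..n. T k \<omega> * T k \<omega>' / D k) \<partial>M)"
      unfolding B_def T_def Q_def D_def using kernel[OF Z01[of \<omega>] Z01] by simp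
    also have "\<dots> = 1 + (\<integral>\<omega>'. (\<Sum>k=1..n. T k \<omega> * T k \<omega>' / D k) \<partial>M)"
      using intTc prob_space by (simp add: integral_sum)
    also have "(\<integral>\<omega>'. (\<Sum>k=1..n. T k \<omega> * T k \<omega>' / D k) \<partial>M) = (\<Sum>k=1..n. T k \<omega> * e k / D k)"
      unfolding e_def using intTc prob_space by (simp add: integral_sum)
    finally show ?thesis .
  qed
  have key: "(\<Sum>y=0..n. P y * P y / Q y) = 1 + (\<Sum>k=1..n. e k * e k / D k)"
  proof -
    have "(\<Sum>y=0..n. P y * P y / Q y) = (\<Sum>y=0..n. (\<integral>\<omega>. B y \<omega> * P y / Q y \<partial>M))"
      unfolding P_def by simp
    also have "\<dots> = (\<integral>\<omega>. (\<Sum>y=0..n. B y \<omega> * P y / Q y) \<partial>M)"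
      using intBc by (simp add: integral_sum)
    also have "\<dots> = (\<integral>\<omega>. 1 + (\<Sum>k=1..n. T k \<omega> * e k / D k) \<partial>M)"
      unfolding inner ..
    also have "\<dots> = 1 + (\<Sum>k=1..n. e k * e k / D k)"
      unfolding e_def using intTc prob_space by (simp add: integral_sum)
    finally show ?thesis .
  qed
  have "chi_sq n (\<lambda>y. \<integral>\<omega>. binom_channel n (X \<omega>) y \<partial>M) (PYr n) = (\<Sum>y=0..n. (P y - Q y)^2 / Q y)"
    unfolding chi_sq_def PX Q_def ..
  also have "\<dots> = (\<Sum>y=0..n. P y * P y / Q y - 2 * P y + Q y)"
  proof (rule sum.cong)
    fix y assume "y \<in> {0..n}"
    then have "Q y \<noteq> 0" using Qpos by force
    then show "(P y - Q y)^2 / Q y = P y * P y / Q y - 2 * P y + Q y"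
      by (simp add: field_simps power2_eq_square)
  qed simp
  also have "\<dots> = (\<Sum>y=0..n. P y * P y / Q y) - 2 * (\<Sum>y=0..n. P y) + (\<Sum>y=0..n. Q y)"
    by (simp add: sum.distrib sum_subtractf sum_distrib_left)
  also have "\<dots> = (\<Sum>k=1..n. e k * e k / D k)" unfolding key sumP sumQ by simp
  also have "\<dots> = (\<Sum>k=1..n. (\<integral>\<omega>. shifted_cheb k (X \<omega>) \<partial>M)^2
              / ((1/2) * (\<Prod>j=1..k. (real n + real j) / (real n - real j + 1))))"
    unfolding eX D_def by (simp add: power2_eq_square)
  finally show ?thesis .
qed
end
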